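(* Let $\mathsf{T}$ be a rooted plane tree with $n\geq 2$ nodes and root $\mathfrak{r}$. Let $C^*\in\mathcal{M}_\mathsf{T}$ be a maximal chain with $|C^*|+f_{C^*}(\mathfrak{r})=\max_{C\in\mathcal{M}_\mathsf{T}}(|C|+f_C(\mathfrak{r}))$, and let $k=f_{C^*}(\mathfrak{r})$. Let $v_0=\mathfrak{r},v_1,\dots,v_{|C^*|-1}$ be the nodes of $C^*$ from top to bottom. For $0\leq i\leq|C^*|-2$, let $B_i=\{u\in\mathsf{T}\setminus C^*:u\leq_\mathsf{T} v_i,\ u\not\leq_\mathsf{T} v_{i+1}\}$. Define a partial order $\sqsubseteq$ on $\mathsf{T}\setminus C^*$ by: for $x\in B_i$, $y\in B_j$, if $i>j$ then $x\sqsubseteq y$; if $i=j$ then $x\sqsubseteq y$ iff $x\geq_\mathsf{T} y$. Let $v_{|C^*|},\dots,v_{|\mathsf{T}|-1}$ be an ordering of $\mathsf{T}\setminus C^*$ such that $a\leq b$ whenever $v_a\sqsubseteq v_b$. Let $\delta^\dagger$ be the ornamentation of $\mathsf{T}$ given by $\delta^\dagger(v_i)=\{v_i,v_{i+1},\dots,v_{|C^*|+k-1-i}\}$ for $0\leq i\leq k$ and $\delta^\dagger(v)=\{v\}$ for $v\notin\{v_0,\dots,v_k\}$. Then for all integers $0\leq i\leq k$ and $p\geq 0$, \[\mathsf{Pop}^p(\delta^\dagger)(v_i)=\{v_i\}\cup\{v_j:i+1\leq j\leq|C^*|+k-1-i-p\}.\]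
   Context: A rooted plane tree $\mathsf{T}$ is a finite tree with a distinguished root $\mathfrak{r}$, regarded as a poset $\leq_\mathsf{T}$ in which $v'\leq_\mathsf{T} v$ iff $v$ lies on the path from $v'$ to $\mathfrak{r}$. $\Delta_\mathsf{T}(v)=\{v':v'\leq_\mathsf{T} v\}$; a leaf is a node covering nothing. $\mathcal{M}_\mathsf{T}$ is the set of maximal chains (leaf-to-root paths). For $C\in\mathcal{M}_\mathsf{T}$ and $v\in C$: $\mathrm{height}_C(v)$ is the number of elements of $C$ strictly below $v$; if $v$ is not a leaf, $\mathrm{ch}_C(v)$ is the element of $C$ covered by $v$; $b_C(v)=|\Delta_\mathsf{T}(v)|-\mathrm{height}_C(v)-1$; $f_C(v)=0$ if $v$ is a leaf, and otherwise with $w=\mathrm{ch}_C(v)$, $f_C(v)=f_C(w)+1$ if $f_C(w)+1\leq b_C(w)$ and $f_C(v)=f_C(w)$ otherwise. An ornament is a nonempty set of nodes inducing a connected subgraph; an ornamentation is a map $\delta$ from nodes to ornaments such that the maximal element of $\delta(v)$ is $v$ and any two sets $\delta(v),\delta(v')$ are nested or disjoint. $\mathcal{O}(\mathsf{T})$ is the set of ornamentations ordered by pointwise inclusion (a lattice with meet given by pointwise intersection), and $\mathsf{Pop}(\delta)=\bigwedge(\{\delta\}\cup\{\delta':\delta'\lessdot\delta\})$; $\mathsf{Pop}^p$ is the $p$-th iterate. *)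

theory Defs
  imports Main
begin

text \<open>The edges are {v, par v} for v in V - {r}.\<close>

definition rooted_tree :: "'a set \<Rightarrow> 'a \<Rightarrow> ('a \<Rightarrow> 'a) \<Rightarrow> bool" where
  "rooted_tree V r par \<longleftrightarrow> finite V \<and> r \<in> V \<and> par r = r \<and>
     (\<forall>v\<in>V. par v \<in> V) \<and> (\<forall>v\<in>V. \<exists>k. (par ^^ k) v = r)"

definition tle :: "('a \<Rightarrow> 'a) \<Rightarrow> 'a \<Rightarrow> 'a \<Rightarrow> bool" where
  "tle par u v \<longleftrightarrow> (\<exists>k. (par ^^ k) u = v)"

definition Delta :: "'a set \<Rightarrow> ('a \<Rightarrow> 'a) \<Rightarrow> 'a \<Rightarrow> 'a set" where
  "Delta V par v = {u \<in> V. tle par u v}"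

definition is_leaf :: "'a set \<Rightarrow> ('a \<Rightarrow> 'a) \<Rightarrow> 'a \<Rightarrow> bool" where
  "is_leaf V par v \<longleftrightarrow> v \<in> V \<and> (\<forall>u\<in>V. tle par u v \<longrightarrow> u = v)"

text \<open>Maximal chains = leaf-to-root paths.\<close>
definition max_chains :: "'a set \<Rightarrow> ('a \<Rightarrow> 'a) \<Rightarrow> 'a set set" where
  "max_chains V par = {C. \<exists>l. is_leaf V par l \<and> C = {u \<in> V. tle par l u}}"

definition height :: "('a \<Rightarrow> 'a) \<Rightarrow> 'a set \<Rightarrow> 'a \<Rightarrow> nat" where
  "height par C v = card {u \<in> C. tle par u v \<and> u \<noteq> v}"

definition chain_node :: "('a \<Rightarrow> 'a) \<Rightarrow> 'a set \<Rightarrow> nat \<Rightarrow> 'a" where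
  "chain_node par C h = (THE u. u \<in> C \<and> height par C u = h)"

definition bval :: "'a set \<Rightarrow> ('a \<Rightarrow> 'a) \<Rightarrow> 'a set \<Rightarrow> 'a \<Rightarrow> nat" where
  "bval V par C v = card (Delta V par v) - height par C v - 1"

text \<open>fh h is the value f_C at the element of C of height h
  (the child ch_C of the element of height h+1 is the element of height h).\<close>
fun fh :: "'a set \<Rightarrow> ('a \<Rightarrow> 'a) \<Rightarrow> 'a set \<Rightarrow> nat \<Rightarrow> nat" where
  "fh V par C 0 = 0"
| "fh V par C (Suc h) =
     (let w = chain_node par C h in
      if fh V par C h + 1 \<le> bval V par C w then fh V par C h + 1 else fh V par C h)"

definition fval :: "'a set \<Rightarrow> ('a \<Rightarrow> 'a) \<Rightarrow> 'a set \<Rightarrow> 'a \<Rightarrow> nat" where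
  "fval V par C v = fh V par C (height par C v)"

definition adj_in :: "('a \<Rightarrow> 'a) \<Rightarrow> 'a set \<Rightarrow> 'a \<Rightarrow> 'a \<Rightarrow> bool" where
  "adj_in par S x y \<longleftrightarrow> x \<in> S \<and> y \<in> S \<and> x \<noteq> y \<and> (par x = y \<or> par y = x)"

definition ornament :: "'a set \<Rightarrow> ('a \<Rightarrow> 'a) \<Rightarrow> 'a set \<Rightarrow> bool" where
  "ornament V par S \<longleftrightarrow> S \<noteq> {} \<and> S \<subseteq> V \<and>
     (\<forall>x\<in>S. \<forall>y\<in>S. (adj_in par S)\<^sup>*\<^sup>* x y)"

text \<open>Ornamentations as functions on nodes (convention: empty outside V).\<close>
definition ornamentation :: "'a set \<Rightarrow> ('a \<Rightarrow> 'a) \<Rightarrow> ('a \<Rightarrow> 'a set) \<Rightarrow> bool" where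
  "ornamentation V par \<delta> \<longleftrightarrow>
     (\<forall>v. v \<notin> V \<longrightarrow> \<delta> v = {}) \<and>
     (\<forall>v\<in>V. ornament V par (\<delta> v) \<and> v \<in> \<delta> v \<and> (\<forall>u\<in>\<delta> v. tle par u v)) \<and>
     (\<forall>v\<in>V. \<forall>v'\<in>V. \<delta> v \<subseteq> \<delta> v' \<or> \<delta> v' \<subseteq> \<delta> v \<or> \<delta> v \<inter> \<delta> v' = {})"

definition orn_covered :: "'a set \<Rightarrow> ('a \<Rightarrow> 'a) \<Rightarrow> ('a \<Rightarrow> 'a set) \<Rightarrow> ('a \<Rightarrow> 'a set) \<Rightarrow> bool" where
  "orn_covered V par \<delta>' \<delta> \<longleftrightarrow> ornamentation V par \<delta>' \<and> ornamentation V par \<delta> \<and> \<delta>' < \<delta> \<and>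
     \<not> (\<exists>\<delta>''. ornamentation V par \<delta>'' \<and> \<delta>' < \<delta>'' \<and> \<delta>'' < \<delta>)"

definition Pop :: "'a set \<Rightarrow> ('a \<Rightarrow> 'a) \<Rightarrow> ('a \<Rightarrow> 'a set) \<Rightarrow> ('a \<Rightarrow> 'a set)" where
  "Pop V par \<delta> = Inf ({\<delta>} \<union> {\<delta>'. orn_covered V par \<delta>' \<delta>})"

definition block :: "'a set \<Rightarrow> ('a \<Rightarrow> 'a) \<Rightarrow> 'a set \<Rightarrow> (nat \<Rightarrow> 'a) \<Rightarrow> nat \<Rightarrow> 'a set" where
  "block V par C v i = {u \<in> V - C. tle par u (v i) \<and> \<not> tle par u (v (Suc i))}"

definition sqle :: "'a set \<Rightarrow> ('a \<Rightarrow> 'a) \<Rightarrow> 'a set \<Rightarrow> (nat \<Rightarrow> 'a) \<Rightarrow> 'a \<Rightarrow> 'a \<Rightarrow> bool" where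
  "sqle V par C v x y \<longleftrightarrow> (\<exists>i j. i + 2 \<le> card C \<and> j + 2 \<le> card C \<and>
      x \<in> block V par C v i \<and> y \<in> block V par C v j \<and>
      (i > j \<or> (i = j \<and> tle par y x)))"

definition delta_dagger :: "'a set \<Rightarrow> 'a set \<Rightarrow> (nat \<Rightarrow> 'a) \<Rightarrow> nat \<Rightarrow> 'a \<Rightarrow> 'a set" where
  "delta_dagger V C v k u =
     (if u \<in> v ` {0..k} then
        (let i = (LEAST i. i \<le> k \<and> v i = u) in {v j | j. i \<le> j \<and> j \<le> card C + k - 1 - i})
      else if u \<in> V then {u} else {})"

end

theory Submission
  imports Defs
begin


lemma tle_refl[simp]: "tle par u u"
  unfolding tle_def by (rule exI[of _ 0]) simp

lemma funpow_split: "m \<le> m' \<Longrightarrow> (f ^^ m') x = (f ^^ (m' - m)) ((f ^^ m) x)"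
proof -
  assume "m \<le> m'"
  then have "m' = (m' - m) + m" by simp
  then have "(f ^^ m') x = (f ^^ ((m' - m) + m)) x" by simp
  also have "\<dots> = (f ^^ (m' - m)) ((f ^^ m) x)" by (simp only: funpow_add comp_apply)
  finally show ?thesis .
qed

lemma tle_trans: "tle par a b \<Longrightarrow> tle par b c \<Longrightarrow> tle par a c"
  unfolding tle_def
proof -
  assume "\<exists>k. (par ^^ k) a = b" "\<exists>k. (par ^^ k) b = c"
  then obtain m m' where "(par ^^ m) a = b" "(par ^^ m') b = c" by blast
  then have "(par ^^ (m' + m)) a = c" by (simp only: funpow_add comp_apply)
  then show "\<exists>k. (par ^^ k) a = c" by blast
qed

lemma tle_par: "tle par u (par u)"
  unfolding tle_def by (rule exI[of _ 1]) simp

lemma tle_step: "tle par u y \<Longrightarrow> u \<noteq> y \<Longrightarrow> tle par (par u) y"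
  unfolding tle_def
proof -
  assume "\<exists>k. (par ^^ k) u = y" "u \<noteq> y"
  then obtain k where k: "(par ^^ k) u = y" by blast
  with \<open>u \<noteq> y\<close> obtain m where "k = Suc m" by (cases k) auto
  with k have "(par ^^ m) (par u) = y" by (simp add: funpow_Suc_right del: funpow.simps)
  then show "\<exists>k. (par ^^ k) (par u) = y" by blast
qed

lemma tle_comparable: "tle par x a \<Longrightarrow> tle par x b \<Longrightarrow> tle par a b \<or> tle par b a"
  unfolding tle_def
proof -
  assume "\<exists>k. (par ^^ k) x = a" "\<exists>k. (par ^^ k) x = b"
  then obtain m m' where m: "(par ^^ m) x = a" and m': "(par ^^ m') x = b" by blast
  show "(\<exists>k. (par ^^ k) a = b) \<or> (\<exists>k. (par ^^ k) b = a)"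
  proof (cases "m \<le> m'")
    case True
    then have "(par ^^ (m' - m)) a = b" using m m' funpow_split[of m m' par x] by simp
    then show ?thesis by blast
  next
    case False
    then have "(par ^^ (m - m')) b = a" using m m' funpow_split[of m' m par x] by simp
    then show ?thesis by blast
  qed
qed

lemma rt_finite: "rooted_tree V r par \<Longrightarrow> finite V" unfolding rooted_tree_def by simp
lemma rt_root: "rooted_tree V r par \<Longrightarrow> r \<in> V" unfolding rooted_tree_def by simp
lemma rt_parr: "rooted_tree V r par \<Longrightarrow> par r = r" unfolding rooted_tree_def by simp
lemma rt_parV: "rooted_tree V r par \<Longrightarrow> u \<in> V \<Longrightarrow> par u \<in> V" unfolding rooted_tree_def by simp
lemma rt_reach: "rooted_tree V r par \<Longrightarrow> u \<in> V \<Longrightarrow> tle par u r" unfolding rooted_tree_def tle_def by simp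

lemma funpow_fix: "par r = r \<Longrightarrow> (par ^^ j) r = r"
  by (induct j) auto

lemma rt_funpowV:
  assumes t: "rooted_tree V r par" and u: "u \<in> V" shows "(par ^^ j) u \<in> V"
proof (induct j)
  case 0 then show ?case using u by simp
next
  case (Suc j) then show ?case using rt_parV[OF t] by simp
qed

lemma rt_tleV:
  assumes t: "rooted_tree V r par" and u: "u \<in> V" and h: "tle par u y" shows "y \<in> V"
proof -
  obtain j where "(par ^^ j) u = y" using h unfolding tle_def by blast
  then show ?thesis using rt_funpowV[OF t u, of j] by simp
qed

lemma funpow_mult_cycle: "(f ^^ p) u = u \<Longrightarrow> (f ^^ (q * p)) u = u"
proof (induct q)
  case 0 then show ?case by simp
next
  case (Suc q)
  have "(f ^^ (Suc q * p)) u = (f ^^ p) ((f ^^ (q * p)) u)"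
    by (simp only: mult_Suc funpow_add comp_apply)
  then show ?case using Suc by simp
qed

lemma rt_antisym:
  assumes t: "rooted_tree V r par" and u: "u \<in> V" and a: "tle par u y" and b: "tle par y u"
  shows "u = y"
proof -
  obtain a b where ha: "(par ^^ a) u = y" and hb: "(par ^^ b) y = u"
    using a b unfolding tle_def by blast
  show ?thesis
  proof (cases "a + b = 0")
    case True then show ?thesis using ha by simp
  next
    case False
    have cyc: "(par ^^ (b + a)) u = u" using ha hb by (simp add: funpow_add)
    obtain K where K: "(par ^^ K) u = r" using rt_reach[OF t u] unfolding tle_def by blast
    have "1 \<le> b + a" using False by linarith
    then have "K \<le> K * (b + a)" using mult_le_mono2[of 1 "b+a" K] by simp
    have c2: "(par ^^ (K * (b + a))) u = u" using funpow_mult_cycle[OF cyc] .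
    have "(par ^^ (K * (b + a))) u = (par ^^ (K * (b + a) - K)) ((par ^^ K) u)"
      using \<open>K \<le> K * (b + a)\<close> by (rule funpow_split)
    also have "\<dots> = r" using K funpow_fix[of par r, OF rt_parr[OF t]] by simp
    finally have ur: "u = r" using c2 by simp
    then have "y = r" using ha funpow_fix[of par r, OF rt_parr[OF t]] by simp
    with ur show ?thesis by simp
  qed
qed

lemma rt_par_neq:
  assumes t: "rooted_tree V r par" and u: "u \<in> V" and ur: "u \<noteq> r"
  shows "par u \<noteq> u"
proof
  assume pu: "par u = u"
  have "(par ^^ j) u = u" for j using pu by (induct j) auto
  then show False using rt_reach[OF t u] ur unfolding tle_def by auto
qed



locale L =
  fixes V :: "'a set" and r :: 'a and par :: "'a \<Rightarrow> 'a"
    and Cs :: "'a set" and v :: "nat \<Rightarrow> 'a" and k :: nat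
  assumes tree: "rooted_tree V r par"
    and Cs_chain: "Cs \<in> max_chains V par"
    and k_def: "k = fval V par Cs r"
    and v_bij: "bij_betw v {..<card V} V"
    and v_chain: "\<forall>i < card Cs. v i \<in> Cs"
    and v_top: "v 0 = r"
    and v_down: "\<forall>i. Suc i < card Cs \<longrightarrow> par (v (Suc i)) = v i"
    and v_ext: "\<forall>a b. card Cs \<le> a \<and> a < card V \<and> card Cs \<le> b \<and> b < card V \<and>
                  sqle V par Cs v (v a) (v b) \<longrightarrow> a \<le> b"
begin

abbreviation "n \<equiv> card V"
abbreviation "c \<equiv> card Cs"

lemma finV: "finite V" using rt_finite[OF tree] .

lemma leaf_ex: obtains l where "is_leaf V par l" "Cs = {u \<in> V. tle par l u}"
  using Cs_chain unfolding max_chains_def by auto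

lemma CsV: "Cs \<subseteq> V"
  using leaf_ex by auto

lemma finCs: "finite Cs" using finite_subset[OF CsV finV] .

lemma c_le_n: "c \<le> n" using card_mono[OF finV CsV] .

lemma v_inj: "inj_on v {..<n}" using v_bij unfolding bij_betw_def by simp
lemma v_img: "v ` {..<n} = V" using v_bij unfolding bij_betw_def by simp
lemma vV: "a < n \<Longrightarrow> v a \<in> V" using v_img by auto

lemma v_inj_sub: "A \<subseteq> {..<n} \<Longrightarrow> inj_on v A" using inj_on_subset[OF v_inj] by blast

lemma v_eq_iff: "a < n \<Longrightarrow> b < n \<Longrightarrow> v a = v b \<longleftrightarrow> a = b"
  using v_inj unfolding inj_on_def by auto

lemma v_img_c: "v ` {..<c} = Cs"
proof -
  have sub: "v ` {..<c} \<subseteq> Cs" using v_chain by auto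
  have "inj_on v {..<c}" by (rule v_inj_sub) (use c_le_n in auto)
  then have "card (v ` {..<c}) = c" by (simp add: card_image)
  then show ?thesis using card_subset_eq[OF finCs sub] by simp
qed

lemma Cs_elem: "u \<in> Cs \<Longrightarrow> \<exists>j<c. u = v j"
  using v_img_c by auto

lemma c_pos: "1 \<le> c"
proof -
  obtain l where "is_leaf V par l" "Cs = {u \<in> V. tle par l u}" using leaf_ex by blast
  then have "l \<in> Cs" unfolding is_leaf_def by simp
  then have "Cs \<noteq> {}" by blast
  then show ?thesis using finCs by (simp add: Suc_le_eq card_gt_0_iff)
qed

lemma chain_tle: "j \<le> j' \<Longrightarrow> j' < c \<Longrightarrow> tle par (v j') (v j)"
proof (induct j' arbitrary: j)
  case 0 then show ?case by simp
next
  case (Suc j')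
  show ?case
  proof (cases "j = Suc j'")
    case True then show ?thesis by simp
  next
    case False
    then have "j \<le> j'" using Suc by simp
    then have "tle par (v j') (v j)" using Suc by simp
    moreover have "par (v (Suc j')) = v j'" using v_down Suc by simp
    then have "tle par (v (Suc j')) (v j')" using tle_par[of par "v (Suc j')"] by simp
    ultimately show ?thesis using tle_trans[of par "v (Suc j')" "v j'" "v j"] by simp
  qed
qed

lemma chain_tle_iff: "j < c \<Longrightarrow> j' < c \<Longrightarrow> tle par (v j') (v j) \<longleftrightarrow> j \<le> j'"
proof
  assume j: "j < c" and j': "j' < c" and t: "tle par (v j') (v j)"
  show "j \<le> j'"
  proof (rule ccontr)
    assume "\<not> j \<le> j'"
    then have "tle par (v j) (v j')" using chain_tle j by simp
    then have "v j' = v j" using rt_antisym[OF tree vV t] j' c_le_n by simp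
    then show False using v_eq_iff j j' c_le_n \<open>\<not> j \<le> j'\<close> by simp
  qed
qed (simp add: chain_tle)

lemma v_last: "is_leaf V par l \<Longrightarrow> Cs = {u \<in> V. tle par l u} \<Longrightarrow> v (c - 1) = l"
proof -
  assume l: "is_leaf V par l" and Cl: "Cs = {u \<in> V. tle par l u}"
  then have "l \<in> Cs" unfolding is_leaf_def by simp
  then obtain j where j: "j < c" "l = v j" using Cs_elem by blast
  have "v (c - 1) \<in> Cs" using v_chain c_pos by simp
  then have "tle par (v j) (v (c - 1))" using Cl j by simp
  then have "c - 1 \<le> j" using chain_tle_iff j c_pos by simp
  then have "j = c - 1" using j by simp
  then show ?thesis using j by simp
qed

lemma height_v: "i < c \<Longrightarrow> height par Cs (v i) = c - 1 - i"
proof -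
  assume i: "i < c"
  have "{u \<in> Cs. tle par u (v i) \<and> u \<noteq> v i} = v ` {Suc i..<c}"
  proof (intro set_eqI iffI)
    fix u assume "u \<in> {u \<in> Cs. tle par u (v i) \<and> u \<noteq> v i}"
    then obtain j where j: "j < c" "u = v j" "tle par (v j) (v i)" "v j \<noteq> v i" using Cs_elem by auto
    then have "i \<le> j" using chain_tle_iff i by simp
    with j have "Suc i \<le> j" by (cases "i = j") auto
    then show "u \<in> v ` {Suc i..<c}" using j by auto
  next
    fix u assume "u \<in> v ` {Suc i..<c}"
    then obtain j where j: "Suc i \<le> j" "j < c" "u = v j" by auto
    then have "v j \<noteq> v i" using v_eq_iff c_le_n by simp
    then show "u \<in> {u \<in> Cs. tle par u (v i) \<and> u \<noteq> v i}" using j v_chain chain_tle by simp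
  qed
  moreover have "inj_on v {Suc i..<c}" by (rule v_inj_sub) (use c_le_n in auto)
  ultimately show ?thesis unfolding height_def by (simp add: card_image)
qed

lemma chain_node_v: "h < c \<Longrightarrow> chain_node par Cs h = v (c - 1 - h)"
  unfolding chain_node_def
proof (rule the_equality)
  assume h: "h < c"
  show "v (c - 1 - h) \<in> Cs \<and> height par Cs (v (c - 1 - h)) = h"
    using h v_chain height_v by simp
  fix u assume "u \<in> Cs \<and> height par Cs u = h"
  then obtain j where j: "j < c" "u = v j" "height par Cs (v j) = h" using Cs_elem by blast
  then have "c - 1 - j = h" using height_v by simp
  then have "j = c - 1 - h" using j(1) by simp
  then show "u = v (c - 1 - h)" using j by simp
qed

lemma Delta_Cs: "i < c \<Longrightarrow> Delta V par (v i) \<inter> Cs = v ` {i..<c}"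
proof (intro set_eqI iffI)
  fix u assume i: "i < c" and "u \<in> Delta V par (v i) \<inter> Cs"
  then obtain j where j: "j < c" "u = v j" "tle par (v j) (v i)" using Cs_elem unfolding Delta_def by auto
  then show "u \<in> v ` {i..<c}" using chain_tle_iff i by auto
next
  fix u assume i: "i < c" and "u \<in> v ` {i..<c}"
  then obtain j where j: "i \<le> j" "j < c" "u = v j" by auto
  then show "u \<in> Delta V par (v i) \<inter> Cs" using v_chain chain_tle CsV unfolding Delta_def by auto
qed

definition Bc :: "nat \<Rightarrow> nat" where "Bc i = card (Delta V par (v i) - Cs)"

lemma finDelta: "finite (Delta V par x)" unfolding Delta_def using finV by simp

lemma bval_v: "i < c \<Longrightarrow> bval V par Cs (v i) = Bc i"
proof -
  assume i: "i < c"
  have "inj_on v {i..<c}" by (rule v_inj_sub) (use c_le_n in auto)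
  then have c1: "card (Delta V par (v i) \<inter> Cs) = c - i" using Delta_Cs[OF i] by (simp add: card_image)
  have "Delta V par (v i) = (Delta V par (v i) \<inter> Cs) \<union> (Delta V par (v i) - Cs)" by blast
  then have "card (Delta V par (v i)) = card (Delta V par (v i) \<inter> Cs) + card (Delta V par (v i) - Cs)"
    using finDelta card_Un_disjoint[of "Delta V par (v i) \<inter> Cs" "Delta V par (v i) - Cs"]
    by (metis Int_Diff_disjoint finite_Diff finite_Int)
  then show ?thesis unfolding bval_def Bc_def using c1 height_v[OF i] i by simp
qed

lemma Bc_mono: "i \<le> i' \<Longrightarrow> i' < c \<Longrightarrow> Bc i' \<le> Bc i"
proof -
  assume a: "i \<le> i'" "i' < c"
  have "tle par (v i') (v i)" using chain_tle a by simp
  then have "Delta V par (v i') \<subseteq> Delta V par (v i)" unfolding Delta_def using tle_trans[of par _ "v i'" "v i"] by auto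
  then show ?thesis unfolding Bc_def by (intro card_mono) (auto simp: finDelta)
qed

end


context L begin

abbreviation "g \<equiv> fh V par Cs"

lemma b_chain: "h < c \<Longrightarrow> bval V par Cs (chain_node par Cs h) = Bc (c - 1 - h)"
  using chain_node_v bval_v by simp

lemma g_Suc_le: "g (Suc h) \<le> g h + 1"
  by (simp add: Let_def)

lemma F1: "h < c \<Longrightarrow> g h \<le> Bc (c - 1 - h) \<and> g (Suc h) \<le> Bc (c - 1 - h)"
proof (induct h)
  case 0
  then show ?case using b_chain[of 0] by (simp add: Let_def)
next
  case (Suc h)
  then have ih: "g (Suc h) \<le> Bc (c - 1 - h)" by simp
  have "Bc (c - 1 - h) \<le> Bc (c - 1 - Suc h)" using Bc_mono Suc.prems by simp
  with ih have a: "g (Suc h) \<le> Bc (c - 1 - Suc h)" by simp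
  have "g (Suc (Suc h)) \<le> Bc (c - 1 - Suc h)"
    using a b_chain[OF Suc.prems] by (simp add: Let_def)
  with a show ?case by simp
qed

lemma F2: "g h \<le> h"
proof (induct h)
  case 0 then show ?case by simp
next
  case (Suc h) then show ?case using g_Suc_le[of h] by simp
qed

lemma F3: "k = g (c - 1)"
  using k_def unfolding fval_def using height_v[of 0] v_top c_pos by simp

lemma k_lt_c: "k < c" using F2[of "c - 1"] F3 c_pos by simp

lemma F4: "h \<le> c - 1 \<Longrightarrow> k \<le> g h + (c - 1 - h)"
proof (induct "c - 1 - h" arbitrary: h)
  case 0
  then have "h = c - 1" by simp
  then show ?case using F3 by simp
next
  case (Suc d)
  then have d: "d = c - 1 - Suc h" "Suc h \<le> c - 1" by simp_all
  have k1: "k \<le> g (Suc h) + (c - 1 - Suc h)" using Suc.hyps(1)[of "Suc h"] d by blast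
  have e: "c - 1 - Suc h + 1 = c - 1 - h" using d by simp
  show ?case using k1 e g_Suc_le[of h] by linarith
qed

lemma P1: "1 \<le> i \<Longrightarrow> i \<le> k \<Longrightarrow> k + 1 \<le> Bc i + i"
proof -
  assume i: "1 \<le> i" "i \<le> k"
  define h where "h = c - 1 - i"
  have hc: "Suc h \<le> c - 1" using i k_lt_c h_def by simp
  have "k \<le> g (Suc h) + (c - 1 - Suc h)" using F4[OF hc] .
  moreover have "g (Suc h) \<le> Bc (c - 1 - h)" using F1[of h] hc by simp
  moreover have "c - 1 - h = i" using h_def i k_lt_c by simp
  moreover have "c - 1 - Suc h = i - 1" using h_def i k_lt_c by simp
  ultimately show ?thesis using i by simp
qed

lemma Delta_top: "Delta V par (v 0) = V"
  unfolding Delta_def using rt_reach[OF tree] v_top by auto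

lemma Bc0: "Bc 0 = n - c"
  unfolding Bc_def Delta_top using card_Diff_subset[OF finCs CsV] .

lemma ck_le_n: "c + k \<le> n"
proof (cases "k = 0")
  case True then show ?thesis using c_le_n by simp
next
  case False
  then have "k + 1 \<le> Bc 1 + 1" using P1[of 1] by simp
  moreover have "Bc 1 \<le> Bc 0" using Bc_mono[of 0 1] k_lt_c False by simp
  ultimately show ?thesis using Bc0 c_le_n by simp
qed

lemma VmCs: "V - Cs = v ` {c..<n}"
proof -
  have "V = v ` ({..<c} \<union> {c..<n})" using v_img c_le_n
    by (metis ivl_disj_un_one(2) lessThan_atLeast0 zero_le)
  then have "V = Cs \<union> v ` {c..<n}" using v_img_c by (simp add: image_Un)
  moreover have "Cs \<inter> v ` {c..<n} = {}"
  proof -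
    have "v ` {..<c} \<inter> v ` {c..<n} = {}"
      using v_inj c_le_n unfolding inj_on_def by fastforce
    then show ?thesis using v_img_c by simp
  qed
  ultimately show ?thesis by blast
qed

lemma block_ex:
  assumes u: "u \<in> V - Cs"
  shows "\<exists>t. Suc t < c \<and> u \<in> block V par Cs v t \<and> (\<forall>i<c. tle par u (v i) \<longleftrightarrow> i \<le> t)"
proof -
  define T where "T = {t. t < c \<and> tle par u (v t)}"
  have "0 \<in> T" unfolding T_def using c_pos rt_reach[OF tree] u v_top by auto
  have finT: "finite T" unfolding T_def by simp
  define t where "t = Max T"
  have tT: "t \<in> T" unfolding t_def using finT \<open>0 \<in> T\<close> Max_in[OF finT] by blast
  have tmax: "\<And>t'. t' \<in> T \<Longrightarrow> t' \<le> t" unfolding t_def using finT by simp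
  have tc: "Suc t < c"
  proof (rule ccontr)
    assume "\<not> Suc t < c"
    moreover have "t < c" using tT unfolding T_def by simp
    ultimately have "t = c - 1" by linarith
    then have tl: "tle par u (v (c - 1))" using tT unfolding T_def by simp
    obtain l where l: "is_leaf V par l" "Cs = {u \<in> V. tle par l u}" using leaf_ex by blast
    then have "v (c - 1) = l" using v_last by simp
    then have "u = l" using l(1) tl u unfolding is_leaf_def by simp
    then have "u \<in> Cs" using l unfolding is_leaf_def by simp
    then show False using u by simp
  qed
  have iff: "\<forall>i<c. tle par u (v i) \<longleftrightarrow> i \<le> t"
  proof (intro allI impI iffI)
    fix i assume "i < c" "tle par u (v i)"
    then show "i \<le> t" using tmax unfolding T_def by simp
  next
    fix i assume "i < c" "i \<le> t"
    then have "tle par (v t) (v i)" using chain_tle[of i t] tc by simp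
    moreover have "tle par u (v t)" using tT unfolding T_def by simp
    ultimately show "tle par u (v i)" using tle_trans[of par u "v t" "v i"] by simp
  qed
  have "u \<in> block V par Cs v t" unfolding block_def using u iff tc by simp
  then show ?thesis using tc iff by blast
qed

lemma sqle_blocks:
  "x \<in> block V par Cs v t \<Longrightarrow> y \<in> block V par Cs v t' \<Longrightarrow> Suc t < c \<Longrightarrow> Suc t' < c \<Longrightarrow> t' < t
   \<Longrightarrow> sqle V par Cs v x y"
  unfolding sqle_def by (rule exI[of _ t], rule exI[of _ t']) simp

lemma sqle_same:
  "x \<in> block V par Cs v t \<Longrightarrow> y \<in> block V par Cs v t \<Longrightarrow> Suc t < c \<Longrightarrow> tle par y x
   \<Longrightarrow> sqle V par Cs v x y"
  unfolding sqle_def by (rule exI[of _ t], rule exI[of _ t]) simp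

lemma v_ext': "c \<le> a \<Longrightarrow> a < n \<Longrightarrow> c \<le> b \<Longrightarrow> b < n \<Longrightarrow> sqle V par Cs v (v a) (v b) \<Longrightarrow> a \<le> b"
  using v_ext by blast

lemma offchain: "c \<le> a \<Longrightarrow> a < n \<Longrightarrow> v a \<in> V - Cs"
  using VmCs by auto

lemma Pprime:
  assumes i: "1 \<le> i" "i \<le> k" and a: "i \<le> a" "a \<le> c + k - i"
  shows "tle par (v a) (v i)"
proof (cases "a < c")
  case True then show ?thesis using chain_tle a by simp
next
  case False
  have ic: "i < c" using i k_lt_c by simp
  have an: "a < n" using a i ck_le_n by simp
  show ?thesis
  proof (rule ccontr)
    assume nt: "\<not> tle par (v a) (v i)"
    define D where "D = Delta V par (v i) - Cs"
    define A where "A = {a'. c \<le> a' \<and> a' < n \<and> v a' \<in> D}"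
    have DA: "D = v ` A"
    proof -
      have "D \<subseteq> V - Cs" unfolding D_def Delta_def by auto
      then show ?thesis unfolding A_def using VmCs by auto
    qed
    have "inj_on v A" by (rule v_inj_sub) (auto simp: A_def)
    then have cA: "card A = card D" using DA by (simp add: card_image)
    have "A \<subseteq> {c..<a}"
    proof
      fix a' assume a': "a' \<in> A"
      then have a'1: "c \<le> a'" "a' < n" "v a' \<in> D" unfolding A_def by auto
      obtain t where t: "Suc t < c" "v a' \<in> block V par Cs v t" "\<forall>i<c. tle par (v a') (v i) \<longleftrightarrow> i \<le> t"
        using block_ex offchain a'1 by blast
      obtain t' where t': "Suc t' < c" "v a \<in> block V par Cs v t'" "\<forall>i<c. tle par (v a) (v i) \<longleftrightarrow> i \<le> t'"
        using block_ex offchain False an by (meson not_le)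
      have "i \<le> t" using t(3) ic a'1(3) unfolding D_def Delta_def by simp
      moreover have "\<not> i \<le> t'" using t'(3) ic nt by simp
      ultimately have "sqle V par Cs v (v a') (v a)" using sqle_blocks t t' by simp
      then have "a' \<le> a" using v_ext' a'1 an False by simp
      moreover have "a' \<noteq> a" using a'1(3) nt unfolding D_def Delta_def by auto
      ultimately show "a' \<in> {c..<a}" using a'1 by simp
    qed
    then have "card A \<le> a - c" using card_mono[of "{c..<a}" A] by simp
    moreover have "k + 1 \<le> Bc i + i" using P1 i by simp
    ultimately show False using cA a False i unfolding Bc_def D_def by linarith
  qed
qed

lemma Pprime0: "a < n \<Longrightarrow> tle par (v a) (v 0)"
  using rt_reach[OF tree] vV v_top by simp

lemma par_idx:
  assumes a: "c \<le> a" "a < n" and i: "i < c" and t: "tle par (v a) (v i)"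
  shows "\<exists>a'. i \<le> a' \<and> a' < a \<and> par (v a) = v a'"
proof -
  have u: "v a \<in> V - Cs" using offchain a by simp
  obtain t where tb: "Suc t < c" "v a \<in> block V par Cs v t" "\<forall>i<c. tle par (v a) (v i) \<longleftrightarrow> i \<le> t"
    using block_ex[OF u] by blast
  have it: "i \<le> t" using tb(3) i t by simp
  have vat: "tle par (v a) (v t)" using tb by simp
  have nvat: "\<not> tle par (v a) (v (Suc t))" using tb by simp
  have ne: "v a \<noteq> v t" using u v_chain tb(1) by auto
  have pt: "tle par (par (v a)) (v t)" using tle_step[OF vat ne] .
  have npt: "\<not> tle par (par (v a)) (v (Suc t))"
    using nvat tle_trans[OF tle_par[of par "v a"], of "v (Suc t)"] by auto
  have pV: "par (v a) \<in> V" using rt_parV[OF tree] u by simp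
  show ?thesis
  proof (cases "par (v a) \<in> Cs")
    case True
    then obtain s where s: "s < c" "par (v a) = v s" using Cs_elem by blast
    have "t \<le> s" using pt s chain_tle_iff tb(1) by simp
    moreover have "\<not> Suc t \<le> s" using npt s chain_tle_iff tb(1) by simp
    ultimately have "s = t" by simp
    then show ?thesis using s it tb(1) a by (intro exI[of _ t]) simp
  next
    case False
    then have "par (v a) \<in> v ` {c..<n}" using VmCs pV by blast
    then obtain a' where a': "c \<le> a'" "a' < n" "par (v a) = v a'" by auto
    have "v a' \<in> block V par Cs v t" unfolding block_def using a' pt npt pV False by simp
    then have "sqle V par Cs v (v a') (v a)" using sqle_same tb tle_par[of par "v a"] a' by simp
    then have "a' \<le> a" using v_ext' a a' by simp
    moreover have "a' \<noteq> a"
    proof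
      assume "a' = a"
      then have "par (v a) = v a" using a' by simp
      moreover have "v a \<noteq> r" using u v_top v_chain c_pos by auto
      ultimately show False using rt_par_neq[OF tree] u by blast
    qed
    ultimately show ?thesis using a' i by (intro exI[of _ a']) simp
  qed
qed

end


lemma adj_sym: "adj_in par S x y \<longleftrightarrow> adj_in par S y x"
  unfolding adj_in_def by auto

lemma adj_symp: "symp (adj_in par S)"
  unfolding symp_def adj_in_def by auto

lemma path_lemma:
  assumes t: "rooted_tree V r par" and o: "ornament V par S" and top: "\<forall>s\<in>S. tle par s w"
    and w: "w \<in> S" and x: "x \<in> S" and xy: "tle par x y" and yw: "tle par y w"
  shows "y \<in> S"
proof (rule ccontr)
  assume yS: "y \<notin> S"
  have "(adj_in par S)\<^sup>*\<^sup>* x z \<Longrightarrow> tle par z y" for z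
  proof (induct rule: rtranclp_induct)
    case base then show ?case using xy .
  next
    case (step z z')
    then have a: "z \<in> S" "z' \<in> S" "z \<noteq> z'" "par z = z' \<or> par z' = z" unfolding adj_in_def by auto
    show ?case
    proof (cases "par z = z'")
      case True
      have "z \<noteq> y" using a yS by auto
      then show ?thesis using tle_step[OF step(3)] True by simp
    next
      case False
      then have "par z' = z" using a by simp
      then have "tle par z' z" using tle_par[of par z'] by simp
      then show ?thesis using tle_trans[of par z' z y] step(3) by simp
    qed
  qed
  moreover have "(adj_in par S)\<^sup>*\<^sup>* x w" using o x w unfolding ornament_def by blast
  ultimately have "tle par w y" by simp
  moreover have "w \<in> V" using o w unfolding ornament_def by blast
  ultimately have "w = y" using rt_antisym[OF t _ _ yw] by simp
  then show False using w yS by simp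
qed

lemma one_diff:
  fixes f g h :: "'x \<Rightarrow> 'y set"
  assumes "f \<le> g" "g \<le> h" "\<forall>u. u \<noteq> w \<longrightarrow> f u = h u" "h w = insert x (f w)"
  shows "g = f \<or> g = h"
proof (cases "g w = f w")
  case True
  have "g u = f u" for u
  proof (cases "u = w")
    case False
    then show ?thesis using assms(1,2,3) unfolding le_fun_def by (metis subset_antisym)
  qed (use True in simp)
  then show ?thesis by auto
next
  case False
  have "f w \<subseteq> g w" "g w \<subseteq> h w" using assms(1,2) unfolding le_fun_def by auto
  then have "f w \<subseteq> g w" "g w \<subseteq> insert x (f w)" using assms(4) by auto
  then have "g w = insert x (f w)" using False by auto
  then have gw: "g w = h w" using assms(4) by simp
  have "g u = h u" for u
  proof (cases "u = w")
    case False
    then show ?thesis using assms(1,2,3) unfolding le_fun_def by (metis subset_antisym)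
  qed (use gw in simp)
  then show ?thesis by auto
qed

lemma Pop_mem: "x \<in> Pop V par \<delta> u \<longleftrightarrow> x \<in> \<delta> u \<and> (\<forall>\<delta>'. orn_covered V par \<delta>' \<delta> \<longrightarrow> x \<in> \<delta>' u)"
  unfolding Pop_def by (auto simp: Inf_apply)

context L begin

definition I :: "nat \<Rightarrow> int \<Rightarrow> 'a set" where
  "I i e = {v i} \<union> {v j | j. i + 1 \<le> j \<and> int j \<le> e}"

lemma I_mono: "e' \<le> e \<Longrightarrow> I i e' \<subseteq> I i e"
  unfolding I_def by auto

lemma I_elem: "x \<in> I i e \<Longrightarrow> \<exists>j. x = v j \<and> i \<le> j \<and> (j = i \<or> int j \<le> e)"
  unfolding I_def by auto

lemma I_bound:
  assumes i: "i \<le> k" and e: "e \<le> int c + int k - 1 - int i" and x: "x \<in> I i e"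
  shows "\<exists>j. x = v j \<and> i \<le> j \<and> (j = i \<or> int j \<le> e) \<and> j < n \<and> tle par (v j) (v i)"
proof -
  obtain j where j: "x = v j" "i \<le> j" "j = i \<or> int j \<le> e" using I_elem[OF x] by blast
  have jn: "j < n" using j i e ck_le_n k_lt_c by auto
  have "tle par (v j) (v i)"
  proof (cases "i = 0")
    case True then show ?thesis using Pprime0 jn by simp
  next
    case False
    have "j \<le> c + k - i" using j e i k_lt_c by auto
    then show ?thesis using Pprime[of i j] False i j by simp
  qed
  then show ?thesis using j jn by blast
qed

lemma I_conn:
  assumes i: "i \<le> k" and e: "e \<le> int c + int k - 1 - int i"
  shows "j = i \<or> (i + 1 \<le> j \<and> int j \<le> e) \<Longrightarrow> (adj_in par (I i e))\<^sup>*\<^sup>* (v j) (v i)"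
proof (induct j rule: less_induct)
  case (less j)
  show ?case
  proof (cases "j = i")
    case True then show ?thesis by simp
  next
    case False
    then have j: "i + 1 \<le> j" "int j \<le> e" using less.prems by auto
    have jn: "j < n" using j i e ck_le_n k_lt_c by auto
    have vjI: "v j \<in> I i e" unfolding I_def using j by auto
    obtain a' where a': "i \<le> a'" "a' < j" "par (v j) = v a'"
    proof (cases "j < c")
      case True
      then have "par (v j) = v (j - 1)" using v_down j by (metis Suc_diff_1 add_leD2 le_less_trans less_one not_le)
      then show ?thesis using that[of "j - 1"] j by simp
    next
      case False
      have "tle par (v j) (v i)" using I_bound[OF i e vjI] v_eq_iff jn by (metis)
      then show ?thesis using par_idx[of j i] False jn i k_lt_c that by auto
    qed
    have a'I: "a' = i \<or> (i + 1 \<le> a' \<and> int a' \<le> e)" using a' j by auto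
    have "v a' \<in> I i e" unfolding I_def using a'I by auto
    moreover have "v j \<noteq> v a'" using v_eq_iff a' jn by simp
    ultimately have "adj_in par (I i e) (v j) (v a')" unfolding adj_in_def using vjI a' by simp
    moreover have "(adj_in par (I i e))\<^sup>*\<^sup>* (v a') (v i)" using less.hyps[OF a'(2) a'I] .
    ultimately show ?thesis by (rule converse_rtranclp_into_rtranclp)
  qed
qed

lemma I_orn:
  assumes i: "i \<le> k" and e: "e \<le> int c + int k - 1 - int i"
  shows "ornament V par (I i e) \<and> v i \<in> I i e \<and> (\<forall>u\<in>I i e. tle par u (v i))"
proof -
  have sub: "I i e \<subseteq> V" using I_bound[OF i e] vV by blast
  have top: "\<forall>u\<in>I i e. tle par u (v i)" using I_bound[OF i e] by blast
  have conn: "(adj_in par (I i e))\<^sup>*\<^sup>* x (v i)" if xI: "x \<in> I i e" for x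
  proof -
    obtain j where j: "x = v j" "i \<le> j" "j = i \<or> int j \<le> e" using I_elem[OF xI] by blast
    then have "j = i \<or> (i + 1 \<le> j \<and> int j \<le> e)" by linarith
    then show ?thesis using I_conn[OF i e, of j] j by simp
  qed
  have "(adj_in par (I i e))\<^sup>*\<^sup>* x y" if "x \<in> I i e" "y \<in> I i e" for x y
  proof -
    have "(adj_in par (I i e))\<^sup>*\<^sup>* (v i) y"
      using sympD[OF symp_rtranclp[OF adj_symp] conn[OF that(2)]] .
    then show ?thesis using rtranclp_trans[OF conn[OF that(1)]] by blast
  qed
  moreover have "v i \<in> I i e" unfolding I_def by simp
  ultimately show ?thesis unfolding ornament_def using sub top by blast
qed

definition DD :: "(nat \<Rightarrow> int) \<Rightarrow> 'a \<Rightarrow> 'a set" where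
  "DD E u = (if u \<in> v ` {0..k} then (let i = (LEAST i. i \<le> k \<and> v i = u) in I i (E i))
             else if u \<in> V then {u} else {})"

lemma DD_v: "i \<le> k \<Longrightarrow> DD E (v i) = I i (E i)"
proof -
  assume i: "i \<le> k"
  have "(LEAST i'. i' \<le> k \<and> v i' = v i) = i"
  proof (rule Least_equality)
    show "i \<le> k \<and> v i = v i" using i by simp
    fix y assume "y \<le> k \<and> v y = v i"
    then show "i \<le> y" using v_eq_iff[of y i] i k_lt_c c_le_n by simp
  qed
  then show ?thesis unfolding DD_def using i by simp
qed

lemma DD_other: "u \<notin> v ` {0..k} \<Longrightarrow> DD E u = (if u \<in> V then {u} else {})"
  unfolding DD_def by simp

lemma DD_cases:
  assumes "\<And>i. i \<le> k \<Longrightarrow> u = v i \<Longrightarrow> P" "u \<notin> v ` {0..k} \<Longrightarrow> P" shows P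
proof (cases "u \<in> v ` {0..k}")
  case True
  then obtain i where "i \<in> {0..k}" "u = v i" by blast
  then show ?thesis using assms(1) by simp
qed (use assms(2) in blast)

lemma vk_V: "i \<le> k \<Longrightarrow> v i \<in> V" using vV k_lt_c c_le_n by simp

lemma v_neq: "a < n \<Longrightarrow> b < n \<Longrightarrow> a \<noteq> b \<Longrightarrow> v a \<noteq> v b" using v_eq_iff by simp

lemma I_disj:
  assumes i: "i < i'" "i' \<le> k" and e: "E i \<le> int c + int k - 1 - int i" "E i < int i'"
    and e': "E i' \<le> int c + int k - 1 - int i'"
  shows "I i (E i) \<inter> I i' (E i') = {}"
proof -
  have "False" if x1: "x \<in> I i (E i)" and x2: "x \<in> I i' (E i')" for x
  proof -
    obtain j where j: "x = v j" "i \<le> j" "j = i \<or> int j \<le> E i" "j < n"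
      using I_bound[OF _ e(1) x1] i by auto
    obtain j' where j': "x = v j'" "i' \<le> j'" "j' < n"
      using I_bound[OF i(2) e' x2] by auto
    have "j < i'" using j i e by auto
    then show False using j j' v_eq_iff by auto
  qed
  then show ?thesis by blast
qed

lemma ORN:
  assumes E1: "\<forall>i\<le>k. E i \<le> int c + int k - 1 - int i"
    and E2: "\<forall>i i'. i \<le> i' \<longrightarrow> i' \<le> k \<longrightarrow> E i' \<le> E i"
  shows "ornamentation V par (DD E)"
proof -
  have out: "\<forall>u. u \<notin> V \<longrightarrow> DD E u = {}"
  proof (intro allI impI)
    fix u assume "u \<notin> V"
    then have "u \<notin> v ` {0..k}" using vk_V by auto
    then show "DD E u = {}" using DD_other \<open>u \<notin> V\<close> by simp
  qed
  have sing: "ornament V par {u}" if "u \<in> V" for u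
    unfolding ornament_def using that by auto
  have each: "\<forall>u\<in>V. ornament V par (DD E u) \<and> u \<in> DD E u \<and> (\<forall>x\<in>DD E u. tle par x u)"
  proof
    fix u assume u: "u \<in> V"
    show "ornament V par (DD E u) \<and> u \<in> DD E u \<and> (\<forall>x\<in>DD E u. tle par x u)"
    proof (rule DD_cases[of u])
      fix i assume i: "i \<le> k" "u = v i"
      have "ornament V par (I i (E i)) \<and> v i \<in> I i (E i) \<and> (\<forall>u\<in>I i (E i). tle par u (v i))"
        using I_orn[OF i(1)] E1 i(1) by blast
      then show ?thesis using DD_v[OF i(1)] i(2) by simp
    next
      assume "u \<notin> v ` {0..k}"
      then show ?thesis using DD_other sing u by simp
    qed
  qed
  have lam2: "I i (E i) \<subseteq> I i' (E i') \<or> I i' (E i') \<subseteq> I i (E i) \<or> I i (E i) \<inter> I i' (E i') = {}"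
    if ii: "i \<le> i'" "i' \<le> k" for i i'
  proof (cases "i = i'")
    case True then show ?thesis by simp
  next
    case False
    then have ii': "i < i'" using ii by simp
    show ?thesis
    proof (cases "int i' \<le> E i")
      case True
      have "I i' (E i') \<subseteq> I i (E i)"
      proof
        fix x assume "x \<in> I i' (E i')"
        then obtain j where j: "x = v j" "i' \<le> j" "j = i' \<or> int j \<le> E i'" using I_elem by blast
        have "E i' \<le> E i" using E2 ii by simp
        then show "x \<in> I i (E i)" unfolding I_def using j True ii' by auto
      qed
      then show ?thesis by simp
    next
      case False
      then show ?thesis using I_disj[OF ii' ii(2), of E] E1 ii by simp
    qed
  qed
  have lam: "\<forall>x\<in>V. \<forall>y\<in>V. DD E x \<subseteq> DD E y \<or> DD E y \<subseteq> DD E x \<or> DD E x \<inter> DD E y = {}"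
  proof (intro ballI)
    fix x y assume x: "x \<in> V" and y: "y \<in> V"
    show "DD E x \<subseteq> DD E y \<or> DD E y \<subseteq> DD E x \<or> DD E x \<inter> DD E y = {}"
    proof (rule DD_cases[of x])
      fix i assume i: "i \<le> k" "x = v i"
      show ?thesis
      proof (rule DD_cases[of y])
        fix i' assume i': "i' \<le> k" "y = v i'"
        show ?thesis
        proof (cases "i \<le> i'")
          case True then show ?thesis using lam2[OF True i'(1)] i i' DD_v by simp
        next
          case False then show ?thesis using lam2[of i' i] i i' DD_v by auto
        qed
      next
        assume "y \<notin> v ` {0..k}"
        then show ?thesis using DD_other y by auto
      qed
    next
      assume "x \<notin> v ` {0..k}"
      then show ?thesis using DD_other x by auto
    qed
  qed
  show ?thesis unfolding ornamentation_def using out each lam by blast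
qed

end


context L begin

definition Ep :: "nat \<Rightarrow> nat \<Rightarrow> int" where
  "Ep p i = int c + int k - 1 - int i - int p"

definition Ec :: "nat \<Rightarrow> nat \<Rightarrow> nat \<Rightarrow> int" where
  "Ec p i0 = (Ep p)(i0 := Ep p i0 - 1)"

lemma Ep_orn: "ornamentation V par (DD (Ep p))"
  by (rule ORN) (auto simp: Ep_def)

lemma Ec_orn: "ornamentation V par (DD (Ec p i0))"
  by (rule ORN) (auto simp: Ec_def Ep_def)

lemma DD_mono: "(\<forall>i\<le>k. E' i \<le> E i) \<Longrightarrow> DD E' u \<subseteq> DD E u"
proof (rule DD_cases[of u])
  fix i assume "\<forall>i\<le>k. E' i \<le> E i" "i \<le> k" "u = v i"
  then show ?thesis using DD_v I_mono by simp
next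
  assume "u \<notin> v ` {0..k}"
  then show ?thesis using DD_other by simp
qed

lemma I_split:
  assumes a: "x \<in> I i e" and b: "x \<notin> I i (e - 1)" shows "\<exists>J. x = v J \<and> i + 1 \<le> J \<and> int J = e"
proof -
  have "x \<noteq> v i" using b unfolding I_def by auto
  then obtain j where j: "x = v j" "i + 1 \<le> j" "int j \<le> e" using a unfolding I_def by auto
  have "\<not> int j \<le> e - 1" using b j unfolding I_def by auto
  then show ?thesis using j by (intro exI[of _ j]) simp
qed

lemma I_insert:
  assumes e: "int i + 1 \<le> e" shows "I i e = insert (v (nat e)) (I i (e - 1))"
proof (intro set_eqI iffI)
  fix x assume x: "x \<in> I i e"
  show "x \<in> insert (v (nat e)) (I i (e - 1))"
  proof (cases "x \<in> I i (e - 1)")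
    case False
    then obtain J where "x = v J" "int J = e" using I_split[OF x] by blast
    then show ?thesis by auto
  qed simp
next
  fix x assume "x \<in> insert (v (nat e)) (I i (e - 1))"
  moreover have "v (nat e) \<in> I i e" unfolding I_def using e by (auto intro!: exI[of _ "nat e"])
  moreover have "I i (e - 1) \<subseteq> I i e" by (rule I_mono) simp
  ultimately show "x \<in> I i e" by blast
qed

lemma Jn: "i \<le> k \<Longrightarrow> int J \<le> int c + int k - 1 - int i \<Longrightarrow> J < n"
  using ck_le_n by auto

lemma KEY:
  assumes o: "ornamentation V par \<delta>'" and lt: "\<delta>' < DD (Ep p)"
  shows "\<exists>i J. i \<le> k \<and> i + 1 \<le> J \<and> int J = Ep p i \<and> v J \<notin> \<delta>' (v i)"
proof -
  have le: "\<And>u. \<delta>' u \<subseteq> DD (Ep p) u" using lt unfolding less_fun_def le_fun_def by auto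
  have ne: "\<delta>' \<noteq> DD (Ep p)" using lt by auto
  then obtain u where u: "\<delta>' u \<noteq> DD (Ep p) u" by (meson ext)
  have oo: "\<forall>u. u \<notin> V \<longrightarrow> \<delta>' u = {}"
    "\<forall>u\<in>V. ornament V par (\<delta>' u) \<and> u \<in> \<delta>' u \<and> (\<forall>x\<in>\<delta>' u. tle par x u)"
    "\<forall>x\<in>V. \<forall>y\<in>V. \<delta>' x \<subseteq> \<delta>' y \<or> \<delta>' y \<subseteq> \<delta>' x \<or> \<delta>' x \<inter> \<delta>' y = {}"
    using o unfolding ornamentation_def by blast+
  define S where "S = {i. i \<le> k \<and> \<delta>' (v i) \<noteq> I i (Ep p i)}"
  have "S \<noteq> {}"
  proof (rule DD_cases[of u])
    fix i assume "i \<le> k" "u = v i"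
    then have "i \<in> S" using u DD_v unfolding S_def by simp
    then show ?thesis by blast
  next
    assume nu: "u \<notin> v ` {0..k}"
    have False
    proof (cases "u \<in> V")
      case True
      then have "\<delta>' u \<subseteq> {u}" "u \<in> \<delta>' u" using le[of u] DD_other[OF nu] oo(2) by auto
      then show False using u DD_other[OF nu] True by auto
    next
      case False
      then show False using u DD_other[OF nu] oo(1) by simp
    qed
    then show ?thesis by simp
  qed
  have finS: "finite S" unfolding S_def by simp
  define i where "i = Max S"
  have iS: "i \<in> S" unfolding i_def using Max_in[OF finS \<open>S \<noteq> {}\<close>] .
  have imax: "\<And>i'. i' \<in> S \<Longrightarrow> i' \<le> i" unfolding i_def using finS by simp
  have ik: "i \<le> k" using iS unfolding S_def by simp
  have dne: "\<delta>' (v i) \<noteq> I i (Ep p i)" using iS unfolding S_def by simp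
  have dsub: "\<delta>' (v i) \<subseteq> I i (Ep p i)" using le[of "v i"] DD_v[OF ik] by simp
  then obtain x where x: "x \<in> I i (Ep p i)" "x \<notin> \<delta>' (v i)" using dne by blast
  have viV: "v i \<in> V" using vk_V[OF ik] .
  have od: "ornament V par (\<delta>' (v i))" "v i \<in> \<delta>' (v i)" "\<forall>y\<in>\<delta>' (v i). tle par y (v i)"
    using oo(2) viV by auto
  obtain j where j: "x = v j" "i + 1 \<le> j" "int j \<le> Ep p i"
    using x od(2) unfolding I_def by auto
  define J where "J = nat (Ep p i)"
  have J: "int J = Ep p i" "i + 1 \<le> J" "j \<le> J" using j unfolding J_def by auto
  have Jb: "int J \<le> int c + int k - 1 - int i" using J unfolding Ep_def by simp
  have Jn: "J < n" using Jn[OF ik Jb] .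
  show ?thesis
  proof (cases "v J \<in> \<delta>' (v i)")
    case False
    then show ?thesis using ik J by blast
  next
    case True
    have jJ: "j < J" using J(3) True x(2) j(1) by (cases "j = J") auto
    have False
    proof (cases "i = k")
      case True
      have Jc: "J < c" using Jb J(1) unfolding Ep_def using True by simp
      have "tle par (v J) (v j)" using chain_tle jJ Jc by simp
      moreover have "tle par (v j) (v i)" using chain_tle j jJ Jc by simp
      ultimately have "v j \<in> \<delta>' (v i)"
        using path_lemma[OF tree od(1) od(3) od(2) \<open>v J \<in> \<delta>' (v i)\<close>] by blast
      then show False using x j by simp
    next
      case False
      then have i1k: "i + 1 \<le> k" using ik by simp
      have "i + 1 \<notin> S" using imax by fastforce
      then have d1: "\<delta>' (v (i + 1)) = I (i + 1) (Ep p (i + 1))" using i1k unfolding S_def by simp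
      have "Ep p (i + 1) = Ep p i - 1" unfolding Ep_def by simp
      then have vj1: "v j \<in> \<delta>' (v (i + 1))" using d1 j jJ J unfolding I_def by (cases "j = i + 1") auto
      have "J \<le> c + k - (i + 1)" using Jb by simp
      then have t1: "tle par (v J) (v (i + 1))" using Pprime[of "i + 1" J] i1k J by simp
      have t2: "tle par (v (i + 1)) (v i)" using chain_tle[of i "i + 1"] i1k k_lt_c by simp
      have vi1: "v (i + 1) \<in> \<delta>' (v i)"
        using path_lemma[OF tree od(1) od(3) od(2) \<open>v J \<in> \<delta>' (v i)\<close> t1 t2] .
      have vi1V: "v (i + 1) \<in> V" using vk_V[OF i1k] .
      have od1: "v (i + 1) \<in> \<delta>' (v (i + 1))" "\<forall>y\<in>\<delta>' (v (i + 1)). tle par y (v (i + 1))"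
        using oo(2) vi1V by auto
      consider "\<delta>' (v i) \<subseteq> \<delta>' (v (i + 1))" | "\<delta>' (v (i + 1)) \<subseteq> \<delta>' (v i)"
        | "\<delta>' (v i) \<inter> \<delta>' (v (i + 1)) = {}"
        using oo(3) viV vi1V by blast
      then show False
      proof cases
        case 1
        then have "tle par (v i) (v (i + 1))" using od(2) od1(2) by blast
        then have "v i = v (i + 1)" using rt_antisym[OF tree viV _ t2] by simp
        then show False using v_neq[of i "i + 1"] i1k k_lt_c c_le_n by simp
      next
        case 2 then show False using vj1 x j by auto
      next
        case 3 then show False using vi1 od1(1) by auto
      qed
    qed
    then show ?thesis by simp
  qed
qed

lemma cover_exists:
  assumes ik: "i \<le> k" and e: "int i + 1 \<le> Ep p i"
  shows "orn_covered V par (DD (Ec p i)) (DD (Ep p))"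
proof -
  define J where "J = nat (Ep p i)"
  have J: "int J = Ep p i" "i + 1 \<le> J" using e unfolding J_def by auto
  have Jn: "J < n" using Jn[OF ik, of J] J unfolding Ep_def by simp
  have le: "DD (Ec p i) \<le> DD (Ep p)"
    unfolding le_fun_def by (intro allI DD_mono) (auto simp: Ec_def)
  have ins: "DD (Ep p) (v i) = insert (v J) (DD (Ec p i) (v i))"
    using DD_v[OF ik] I_insert[OF e] unfolding J_def Ec_def by simp
  have notin: "v J \<notin> DD (Ec p i) (v i)"
  proof
    assume "v J \<in> DD (Ec p i) (v i)"
    then have "v J \<in> I i (Ep p i - 1)" using DD_v[OF ik] unfolding Ec_def by simp
    then obtain j where jj: "v J = v j" "i \<le> j" "j = i \<or> int j \<le> Ep p i - 1" "j < n"
      using I_bound[OF ik, of "Ep p i - 1"] unfolding Ep_def by auto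
    then have "J = j" using v_eq_iff Jn by simp
    then show False using jj J by auto
  qed
  have same: "\<forall>u. u \<noteq> v i \<longrightarrow> DD (Ec p i) u = DD (Ep p) u"
  proof (intro allI impI)
    fix u assume ui: "u \<noteq> v i"
    show "DD (Ec p i) u = DD (Ep p) u"
    proof (rule DD_cases[of u])
      fix i' assume "i' \<le> k" "u = v i'"
      then show ?thesis using DD_v ui unfolding Ec_def by auto
    next
      assume "u \<notin> v ` {0..k}"
      then show ?thesis using DD_other by simp
    qed
  qed
  have lt: "DD (Ec p i) < DD (Ep p)" using le ins notin by (auto simp: less_le)
  have nob: "\<not> (\<exists>\<delta>''. ornamentation V par \<delta>'' \<and> DD (Ec p i) < \<delta>'' \<and> \<delta>'' < DD (Ep p))"
  proof
    assume "\<exists>\<delta>''. ornamentation V par \<delta>'' \<and> DD (Ec p i) < \<delta>'' \<and> \<delta>'' < DD (Ep p)"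
    then obtain d where d: "DD (Ec p i) < d" "d < DD (Ep p)" by blast
    have "d = DD (Ec p i) \<or> d = DD (Ep p)"
      using one_diff[of "DD (Ec p i)" d "DD (Ep p)" "v i" "v J"] d same ins by auto
    then show False using d by auto
  qed
  show ?thesis unfolding orn_covered_def using Ec_orn Ep_orn lt nob by blast
qed

lemma cover_above:
  assumes cov: "orn_covered V par \<delta>' (DD (Ep p))"
  shows "DD (Ep (Suc p)) \<le> \<delta>'"
proof -
  have o: "ornamentation V par \<delta>'" and lt: "\<delta>' < DD (Ep p)"
    and nob: "\<not> (\<exists>\<delta>''. ornamentation V par \<delta>'' \<and> \<delta>' < \<delta>'' \<and> \<delta>'' < DD (Ep p))"
    using cov unfolding orn_covered_def by blast+
  obtain i J where iJ: "i \<le> k" "i + 1 \<le> J" "int J = Ep p i" "v J \<notin> \<delta>' (v i)"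
    using KEY[OF o lt] by blast
  have e: "int i + 1 \<le> Ep p i" using iJ by simp
  have le: "\<And>u. \<delta>' u \<subseteq> DD (Ep p) u" using lt unfolding less_fun_def le_fun_def by auto
  have le2: "\<delta>' \<le> DD (Ec p i)"
    unfolding le_fun_def
  proof
    fix u show "\<delta>' u \<subseteq> DD (Ec p i) u"
    proof (rule DD_cases[of u])
      fix i' assume i': "i' \<le> k" "u = v i'"
      show ?thesis
      proof (cases "i' = i")
        case True
        have "\<delta>' (v i) \<subseteq> insert (v J) (I i (Ep p i - 1))"
          using le[of "v i"] DD_v[OF iJ(1)] I_insert[OF e] iJ(3) by (metis nat_int)
        then have "\<delta>' (v i) \<subseteq> I i (Ep p i - 1)" using iJ(4) by blast
        then show ?thesis using True i' DD_v unfolding Ec_def by simp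
      next
        case False
        then show ?thesis using le[of u] i' DD_v unfolding Ec_def by simp
      qed
    next
      assume "u \<notin> v ` {0..k}"
      then show ?thesis using le[of u] DD_other by simp
    qed
  qed
  have covE: "orn_covered V par (DD (Ec p i)) (DD (Ep p))" using cover_exists[OF iJ(1) e] .
  then have ltE: "DD (Ec p i) < DD (Ep p)" unfolding orn_covered_def by blast
  have eq: "\<delta>' = DD (Ec p i)"
  proof (rule ccontr)
    assume "\<delta>' \<noteq> DD (Ec p i)"
    then have "\<delta>' < DD (Ec p i)" using le2 by (simp add: less_le)
    then show False using nob Ec_orn ltE by blast
  qed
  have "DD (Ep (Suc p)) \<le> DD (Ec p i)"
    unfolding le_fun_def by (intro allI DD_mono) (auto simp: Ec_def Ep_def)
  then show ?thesis using eq by simp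
qed

lemma Pop_step: "Pop V par (DD (Ep p)) = DD (Ep (Suc p))"
proof (intro ext set_eqI)
  fix u x
  show "x \<in> Pop V par (DD (Ep p)) u \<longleftrightarrow> x \<in> DD (Ep (Suc p)) u"
  proof
    assume "x \<in> DD (Ep (Suc p)) u"
    moreover have "DD (Ep (Suc p)) u \<subseteq> DD (Ep p) u" by (rule DD_mono) (auto simp: Ep_def)
    moreover have "\<And>\<delta>'. orn_covered V par \<delta>' (DD (Ep p)) \<Longrightarrow> DD (Ep (Suc p)) u \<subseteq> \<delta>' u"
      using cover_above unfolding le_fun_def by blast
    ultimately show "x \<in> Pop V par (DD (Ep p)) u" unfolding Pop_mem by blast
  next
    assume "x \<in> Pop V par (DD (Ep p)) u"
    then have x1: "x \<in> DD (Ep p) u" and x2: "\<And>\<delta>'. orn_covered V par \<delta>' (DD (Ep p)) \<Longrightarrow> x \<in> \<delta>' u"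
      unfolding Pop_mem by blast+
    show "x \<in> DD (Ep (Suc p)) u"
    proof (rule DD_cases[of u])
      fix i assume i: "i \<le> k" "u = v i"
      have eS: "Ep (Suc p) i = Ep p i - 1" unfolding Ep_def by simp
      show ?thesis
      proof (rule ccontr)
        assume nx: "x \<notin> DD (Ep (Suc p)) u"
        have "x \<in> I i (Ep p i)" using x1 i DD_v by simp
        moreover have "x \<notin> I i (Ep p i - 1)" using nx i DD_v eS by simp
        ultimately obtain J where J: "x = v J" "i + 1 \<le> J" "int J = Ep p i" using I_split by blast
        then have e: "int i + 1 \<le> Ep p i" by simp
        have "x \<in> DD (Ec p i) (v i)" using x2[OF cover_exists[OF i(1) e]] i by simp
        then have "x \<in> I i (Ep p i - 1)" using DD_v[OF i(1)] unfolding Ec_def by simp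
        then show False using \<open>x \<notin> I i (Ep p i - 1)\<close> by simp
      qed
    next
      assume "u \<notin> v ` {0..k}"
      then show ?thesis using x1 DD_other by simp
    qed
  qed
qed

lemma dd_base: "delta_dagger V Cs v k = DD (Ep 0)"
proof (rule ext)
  fix u
  show "delta_dagger V Cs v k u = DD (Ep 0) u"
  proof (cases "u \<in> v ` {0..k}")
    case True
    define i where "i = (LEAST i. i \<le> k \<and> v i = u)"
    obtain i0 where "i0 \<le> k" "v i0 = u" using True by auto
    then have ik: "i \<le> k" unfolding i_def by (metis (mono_tags, lifting) LeastI)
    have "{v j |j. i \<le> j \<and> j \<le> c + k - 1 - i} = I i (Ep 0 i)"
    proof (intro set_eqI iffI)
      fix x assume "x \<in> {v j |j. i \<le> j \<and> j \<le> c + k - 1 - i}"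
      then obtain j where j: "x = v j" "i \<le> j" "j \<le> c + k - 1 - i" by blast
      show "x \<in> I i (Ep 0 i)"
      proof (cases "j = i")
        case True then show ?thesis using j unfolding I_def by simp
      next
        case False
        then have "i + 1 \<le> j" "int j \<le> int c + int k - 1 - int i" using j ik c_pos by auto
        then show ?thesis using j unfolding I_def Ep_def by auto
      qed
    next
      fix x assume "x \<in> I i (Ep 0 i)"
      then obtain j where j: "x = v j" "i \<le> j" "j = i \<or> int j \<le> int c + int k - 1 - int i"
        using I_elem unfolding Ep_def by fastforce
      then have "j \<le> c + k - 1 - i" using ik c_pos k_lt_c by auto
      then show "x \<in> {v j |j. i \<le> j \<and> j \<le> c + k - 1 - i}" using j by blast
    qed
    then show ?thesis unfolding delta_dagger_def DD_def using True by (simp add: Let_def i_def)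
  next
    case False
    then show ?thesis unfolding delta_dagger_def DD_def by simp
  qed
qed

lemma iter: "(Pop V par ^^ p) (delta_dagger V Cs v k) = DD (Ep p)"
proof (induct p)
  case 0 then show ?case using dd_base by simp
next
  case (Suc p) then show ?case using Pop_step by simp
qed

lemma main: "\<forall>i p. i \<le> k \<longrightarrow>
     ((Pop V par ^^ p) (delta_dagger V Cs v k)) (v i) =
       {v i} \<union> {v j | j. i + 1 \<le> j \<and>
                  int j \<le> int (card Cs) + int k - 1 - int i - int p}"
  using iter DD_v unfolding I_def Ep_def by simp

end

theorem lemma3p2:
  fixes V :: "'a set" and r :: 'a and par :: "'a \<Rightarrow> 'a"
    and Cs :: "'a set" and v :: "nat \<Rightarrow> 'a" and k :: nat
  assumes tree: "rooted_tree V r par"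
    and n2: "card V \<ge> 2"
    and Cs_chain: "Cs \<in> max_chains V par"
    and Cs_max: "\<forall>C\<in>max_chains V par. card C + fval V par C r \<le> card Cs + fval V par Cs r"
    and k_def: "k = fval V par Cs r"
    and v_bij: "bij_betw v {..<card V} V"
    and v_chain: "\<forall>i < card Cs. v i \<in> Cs"
    and v_top: "v 0 = r"
    and v_down: "\<forall>i. Suc i < card Cs \<longrightarrow> par (v (Suc i)) = v i"
    and v_ext: "\<forall>a b. card Cs \<le> a \<and> a < card V \<and> card Cs \<le> b \<and> b < card V \<and>
                  sqle V par Cs v (v a) (v b) \<longrightarrow> a \<le> b"
  shows "\<forall>i p. i \<le> k \<longrightarrow>
     ((Pop V par ^^ p) (delta_dagger V Cs v k)) (v i) =
       {v i} \<union> {v j | j. i + 1 \<le> j \<and>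
                  int j \<le> int (card Cs) + int k - 1 - int i - int p}"
proof -
  interpret L V r par Cs v k
    by (rule L.intro) (fact tree Cs_chain k_def v_bij v_chain v_top v_down v_ext)+
  show ?thesis using main .
qed

end
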